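(* Consider a Behavioral Security Game on an attack graph $G=(V,\mathcal{E})$ with source $v_s$ and a finite set $\mathcal{D}$ of defenders. Assume every edge attack success probability function $p_{i,j}$ is log-convex, strictly decreasing, and twice continuously differentiable on $[0,\infty)$, and that $\alpha_k\in(0,1]$ for each defender $D_k$. Then the game possesses a pure strategy Nash equilibrium, i.e., a profile $\bar{\mathbf{x}}=(\bar x_k)_{D_k\in\mathcal{D}}$ with $\bar x_k\in X_k$ and $C_k(\bar x_k,\bar{\mathbf{x}}_{-k})\le C_k(x_k,\bar{\mathbf{x}}_{-k})$ for all $x_k\in X_k$ and all $D_k\in\mathcal{D}$.
   Context: An attack graph is a finite directed graph $G=(V,\mathcal{E})$ with a designated source node $v_s$; $\mathcal{P}_m$ is the set of directed paths from $v_s$ to node $v_m$ (as sets of edges); every asset is assumed reachable from $v_s$. Each defender $D_k$ owns assets $V_k\subseteq V\setminus\{v_s\}$, each $v_m$ with loss $L_m\in[0,\infty)$, and has budget $B_k\ge0$ and strategy set $X_k=\{x_k\in\mathbb{R}^{|\mathcal{E}|}_{\ge0}:\mathbf{1}^Tx_k\le B_k\}$, where $x^k_{i,j}$ is $D_k$'s investment on edge $(v_i,v_j)$. The total investment on an edge is $x_{i,j}=\sum_{D_k\in\mathcal{D}}x^k_{i,j}$, and $p_{i,j}:[0,\infty)\to[0,1]$ maps it to the attack success probability, with $p_{i,j}(0)\in(0,1]$. Defender $D_k$ perceives probabilities through the Prelec weighting $w_k(p)=\exp[-(-\log p)^{\alpha_k}]$ and has perceived expected cost $$C_k(x_k,\mathbf{x}_{-k})=\sum_{v_m\in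 V_k}L_m\max_{P\in\mathcal{P}_m}\prod_{(v_i,v_j)\in P}w_k\big(p_{i,j}(x_{i,j})\big).$$ *)

theory Defs
  imports "HOL-Analysis.Analysis"
begin

definition is_path :: "('v \<times> 'v) set \<Rightarrow> 'v \<Rightarrow> 'v \<Rightarrow> 'v list \<Rightarrow> bool" where
  "is_path E s t vs \<longleftrightarrow> vs \<noteq> [] \<and> hd vs = s \<and> last vs = t \<and> distinct vs \<and>
     (\<forall>i. Suc i < length vs \<longrightarrow> (vs ! i, vs ! Suc i) \<in> E)"

definition path_edges :: "'v list \<Rightarrow> ('v \<times> 'v) set" where
  "path_edges vs = set (zip vs (tl vs))"

definition paths :: "('v \<times> 'v) set \<Rightarrow> 'v \<Rightarrow> 'v \<Rightarrow> ('v \<times> 'v) set set" where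
  "paths E s t = path_edges ` {vs. is_path E s t vs}"

definition prelec :: "real \<Rightarrow> real \<Rightarrow> real" where
  "prelec \<alpha> p = exp (- ((- ln p) powr \<alpha>))"

definition log_convex_nonneg :: "(real \<Rightarrow> real) \<Rightarrow> bool" where
  "log_convex_nonneg f \<longleftrightarrow> (\<forall>x\<ge>0. f x > 0) \<and> convex_on {0..} (\<lambda>x. ln (f x))"

definition strictly_decreasing_nonneg :: "(real \<Rightarrow> real) \<Rightarrow> bool" where
  "strictly_decreasing_nonneg f \<longleftrightarrow> (\<forall>x y. 0 \<le> x \<longrightarrow> x < y \<longrightarrow> f y < f x)"

definition C2_nonneg :: "(real \<Rightarrow> real) \<Rightarrow> bool" where
  "C2_nonneg f \<longleftrightarrow> (\<exists>f' f''. (\<forall>x\<ge>0. (f has_real_derivative f' x) (at x within {0..}) \<and>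
                                     (f' has_real_derivative f'' x) (at x within {0..}))
                               \<and> continuous_on {0..} f'')"

definition strategies :: "('v \<times> 'v) set \<Rightarrow> real \<Rightarrow> (('v \<times> 'v) \<Rightarrow> real) set" where
  "strategies E B = {x. (\<forall>e. 0 \<le> x e) \<and> (\<forall>e. e \<notin> E \<longrightarrow> x e = 0) \<and> sum x E \<le> B}"

definition total_inv :: "'d set \<Rightarrow> ('d \<Rightarrow> ('v \<times> 'v) \<Rightarrow> real) \<Rightarrow> ('v \<times> 'v) \<Rightarrow> real" where
  "total_inv D x e = (\<Sum>k\<in>D. x k e)"

definition cost :: "('v \<times> 'v) set \<Rightarrow> 'v \<Rightarrow> 'd set \<Rightarrow> ('d \<Rightarrow> 'v set) \<Rightarrow> ('v \<Rightarrow> real)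
     \<Rightarrow> ('d \<Rightarrow> real) \<Rightarrow> (('v \<times> 'v) \<Rightarrow> real \<Rightarrow> real) \<Rightarrow> 'd \<Rightarrow> ('d \<Rightarrow> ('v \<times> 'v) \<Rightarrow> real) \<Rightarrow> real" where
  "cost E s D assets L \<alpha> p k x =
     (\<Sum>m\<in>assets k. L m * Max ((\<lambda>P. \<Prod>e\<in>P. prelec (\<alpha> k) (p e (total_inv D x e))) ` paths E s m))"

end

theory Submission
  imports Defs "HOL-Homology.Homology"
begin


lemma cproj [continuous_intros]: "continuous_on S (\<lambda>x::'a\<Rightarrow>'b::topological_space. x i)"
  by (rule continuous_on_subset[OF continuous_on_product_coordinates subset_UNIV])

lemma cproj_snd [continuous_intros]: "continuous_on S (\<lambda>z::'c::topological_space \<times> ('a\<Rightarrow>'b::topological_space). snd z i)"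
  by (rule continuous_on_compose2[OF continuous_on_product_coordinates, of S snd]) (auto intro: continuous_intros)

definition ballI :: "'a set \<Rightarrow> ('a \<Rightarrow> real) set" where
 "ballI I = {x. (\<Sum>i\<in>I. (x i)^2) \<le> 1 \<and> (\<forall>i. i \<notin> I \<longrightarrow> x i = 0)}"
definition sphI :: "'a set \<Rightarrow> ('a \<Rightarrow> real) set" where
 "sphI I = {x. (\<Sum>i\<in>I. (x i)^2) = 1 \<and> (\<forall>i. i \<notin> I \<longrightarrow> x i = 0)}"

lemma contractible_ballI: "contractible_space (top_of_set (ballI I))"
proof -
  let ?h = "\<lambda>z::real \<times> ('a \<Rightarrow> real). \<lambda>i. (1 - fst z) * snd z i"
  have c: "continuous_on ({0..1} \<times> ballI I) ?h"
    by (intro continuous_intros)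
  have m: "?h ` ({0..1} \<times> ballI I) \<subseteq> ballI I"
  proof clarsimp
    fix t :: real and x assume t: "0 \<le> t" "t \<le> 1" and x: "x \<in> ballI I"
    have "(\<Sum>i\<in>I. ((1 - t) * x i)^2) = (1-t)^2 * (\<Sum>i\<in>I. (x i)^2)"
      by (simp add: power_mult_distrib sum_distrib_left)
    also have "\<dots> \<le> 1 * 1" using x t unfolding ballI_def
      by (intro mult_mono) (auto simp: power_le_one sum_nonneg)
    finally show "(\<lambda>i. (1 - t) * x i) \<in> ballI I" using x by (auto simp: ballI_def)
  qed
  have "homotopic_with (\<lambda>x. True) (top_of_set (ballI I)) (top_of_set (ballI I)) id (\<lambda>x. (\<lambda>i. 0))"
    unfolding homotopic_with_def
    by (rule exI[of _ ?h]) (use c m in \<open>auto simp: continuous_map_subtopology_eu\<close>)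
  then show ?thesis unfolding contractible_space_def by blast
qed

lemma sphI_sub_ballI: "sphI I \<subseteq> ballI I"
  by (auto simp: sphI_def ballI_def)

lemma brouwer_from_sph:
  fixes f :: "('a \<Rightarrow> real) \<Rightarrow> ('a \<Rightarrow> real)"
  assumes fin: "finite I" and nc: "\<not> contractible_space (top_of_set (sphI I))"
    and cf: "continuous_on (ballI I) f" and fB: "f ` ballI I \<subseteq> ballI I"
  shows "\<exists>x\<in>ballI I. f x = x"
proof (rule ccontr)
  assume nfix: "\<not> ?thesis"
  define d where "d x = (\<lambda>i. x i - f x i)" for x :: "'a \<Rightarrow> real"
  define a where "a x = (\<Sum>i\<in>I. (d x i)^2)" for x
  define b where "b x = (\<Sum>i\<in>I. x i * d x i)" for x
  define c where "c x = (\<Sum>i\<in>I. (x i)^2) - (1::real)" for x :: "'a \<Rightarrow> real"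
  define t where "t x = (- b x + sqrt ((b x)^2 - a x * c x)) / a x" for x
  define r where "r x = (\<lambda>i. x i + t x * d x i)" for x
  have apos: "a x > 0" if x: "x \<in> ballI I" for x
  proof -
    have "f x \<noteq> x" using nfix x by auto
    then obtain i where i: "f x i \<noteq> x i" by auto
    have fx: "f x \<in> ballI I" using fB x by auto
    have iI: "i \<in> I" using i x fx unfolding ballI_def by (metis (mono_tags, lifting) mem_Collect_eq)
    have "0 < (d x i)^2" using i by (simp add: d_def)
    also have "\<dots> \<le> a x" unfolding a_def
      by (rule member_le_sum) (use fin iI in auto)
    finally show ?thesis .
  qed
  have cont: "continuous_on (ballI I) r"
  proof -
    have cd: "continuous_on (ballI I) (\<lambda>x. d x i)" for i
      unfolding d_def by (intro continuous_intros continuous_on_product_then_coordinatewise[OF cf])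
    have ca: "continuous_on (ballI I) a" unfolding a_def by (intro continuous_intros cd)
    have cb: "continuous_on (ballI I) b" unfolding b_def by (intro continuous_intros cd)
    have cc: "continuous_on (ballI I) c" unfolding c_def by (intro continuous_intros)
    have ct: "continuous_on (ballI I) t" unfolding t_def
      by (intro continuous_intros ca cb cc) (metis apos less_irrefl)
    show ?thesis unfolding r_def by (intro continuous_intros ct cd)
  qed
  have rS: "r x \<in> sphI I" if x: "x \<in> ballI I" for x
  proof -
    have ax: "a x > 0" using apos x .
    have cx: "c x \<le> 0" using x by (auto simp: c_def ballI_def)
    have disc: "0 \<le> (b x)^2 - a x * c x" using ax cx
      by (smt (verit) mult_nonneg_nonpos zero_le_power2)
    define sq where "sq = sqrt ((b x)^2 - a x * c x)"
    have sq2: "sq^2 = (b x)^2 - a x * c x" using disc by (simp add: sq_def)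
    have tx: "t x * a x = sq - b x" using ax by (simp add: t_def sq_def)
    have e1: "(\<Sum>i\<in>I. (r x i)^2) = (\<Sum>i\<in>I. (x i)^2 + 2 * t x * (x i * d x i) + (t x)^2 * (d x i)^2)"
      by (rule sum.cong) (simp_all add: r_def power2_eq_square algebra_simps)
    have e2: "\<dots> = (c x + 1) + 2 * t x * b x + (t x)^2 * a x"
      by (simp add: sum.distrib sum_distrib_left a_def b_def c_def)
    have e3: "a x * ((t x)^2 * a x + 2 * t x * b x + c x) = (t x * a x)^2 + 2 * b x * (t x * a x) + a x * c x"
      by (simp add: algebra_simps power2_eq_square)
    have e4: "(t x * a x)^2 + 2 * b x * (t x * a x) + a x * c x = 0"
      unfolding tx using sq2 by (simp add: algebra_simps power2_eq_square)
    have "(t x)^2 * a x + 2 * t x * b x + c x = 0" using e3 e4 ax by simp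
    then have "(\<Sum>i\<in>I. (r x i)^2) = 1" using e1 e2 by simp
    moreover have "f x \<in> ballI I" using fB x by auto
    ultimately show ?thesis using x by (auto simp: sphI_def r_def ballI_def d_def)
  qed
  have rid: "r x = x" if x: "x \<in> sphI I" for x
  proof -
    have xB: "x \<in> ballI I" using x sphI_sub_ballI by auto
    have fx: "f x \<in> ballI I" using fB xB by auto
    have cx: "c x = 0" using x by (simp add: c_def sphI_def)
    have "(\<Sum>i\<in>I. x i * f x i) \<le> (\<Sum>i\<in>I. ((x i)^2 + (f x i)^2) / 2)"
      proof (rule sum_mono)
      fix i show "x i * f x i \<le> ((x i)^2 + (f x i)^2) / 2"
        using sum_squares_bound[of "x i" "f x i"] by simp
    qed
    also have "\<dots> = ((\<Sum>i\<in>I. (x i)^2) + (\<Sum>i\<in>I. (f x i)^2)) / 2"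
      by (simp add: sum.distrib flip: sum_divide_distrib)
    also have "\<dots> \<le> 1" using x fx by (simp add: sphI_def ballI_def)
    finally have "(\<Sum>i\<in>I. x i * f x i) \<le> 1" .
    then have bx: "b x \<ge> 0" using x
      by (simp add: b_def d_def right_diff_distrib sum_subtractf sphI_def power2_eq_square)
    have "t x = 0" using bx by (simp add: t_def cx)
    then show ?thesis by (simp add: r_def)
  qed
  have "retraction_maps (top_of_set (ballI I)) (top_of_set (sphI I)) r id"
    unfolding retraction_maps_def continuous_map_subtopology_eu
  proof (intro conjI)
    show "continuous_on (ballI I) r" by (rule cont)
    show "r \<in> ballI I \<rightarrow> sphI I" using rS by blast
    show "continuous_on (sphI I) id" unfolding id_def by (rule continuous_on_id)
    show "id \<in> sphI I \<rightarrow> ballI I" using sphI_sub_ballI[of I] by auto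
    show "\<forall>x\<in>topspace (top_of_set (sphI I)). r (id x) = x" using rid by simp
  qed
  then have "contractible_space (top_of_set (sphI I))"
    using contractible_space_retraction_map_image contractible_ballI retraction_map_def by blast
  with nc show False by simp
qed




lemma sph_not_contractible:
  assumes fin: "finite I" and ne: "I \<noteq> {}"
  shows "\<not> contractible_space (top_of_set (sphI (I::'a set)))"
proof -
  define N where "N = card I"
  define n where "n = N - 1"
  have N: "N = Suc n" using fin ne by (simp add: N_def n_def card_gt_0_iff)
  obtain idx where bij: "bij_betw idx {..<N} I"
    using ex_bij_betw_nat_finite[OF fin] by (auto simp: N_def lessThan_atLeast0)
  define iv where "iv = the_inv_into {..<N} idx"
  have iv1: "iv a < N" "idx (iv a) = a" if "a \<in> I" for a
    using that bij unfolding iv_def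
    by (auto simp: bij_betw_def the_inv_into_f_f f_the_inv_into_f)
  have iv2: "iv (idx i) = i" if "i < N" for i
    using that bij unfolding iv_def by (auto simp: bij_betw_def the_inv_into_f_f)
  have idxI: "idx i \<in> I" if "i < N" for i using that bij by (auto simp: bij_betw_def)
  define Sn where "Sn = {x::nat\<Rightarrow>real. (\<Sum>i\<le>n. x i ^ 2) = 1 \<and> (\<forall>i>n. x i = 0)}"
  have nsph: "nsphere n = top_of_set Sn"
    by (simp add: nsphere euclidean_product_topology Sn_def)
  define \<phi> where "\<phi> x = (\<lambda>a. if a \<in> I then x (iv a) else 0)" for x :: "nat \<Rightarrow> real"
  define \<psi> where "\<psi> y = (\<lambda>i. if i < N then y (idx i) else 0)" for y :: "'a \<Rightarrow> real"
  have atm: "{..n} = {..<N}" using N by auto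
  have sumeq: "(\<Sum>a\<in>I. g a) = (\<Sum>i<N. g (idx i))" for g :: "'a \<Rightarrow> real"
    using sum.reindex_bij_betw[OF bij, of g] by simp
  have c1: "continuous_on Sn \<phi>"
  proof (rule continuous_on_coordinatewise_then_product)
    fix a show "continuous_on Sn (\<lambda>x. \<phi> x a)"
      by (cases "a \<in> I") (simp_all add: \<phi>_def cproj)
  qed
  have c2: "continuous_on (sphI I) \<psi>"
  proof (rule continuous_on_coordinatewise_then_product)
    fix i show "continuous_on (sphI I) (\<lambda>x. \<psi> x i)"
      by (cases "i < N") (simp_all add: \<psi>_def cproj)
  qed
  have m1: "\<phi> x \<in> sphI I" if "x \<in> Sn" for x
  proof -
    have "(\<Sum>a\<in>I. (\<phi> x a)^2) = (\<Sum>i<N. (x i)^2)"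
      unfolding sumeq by (rule sum.cong) (auto simp: \<phi>_def idxI iv2)
    then show ?thesis using that by (auto simp: sphI_def Sn_def \<phi>_def atm)
  qed
  have m2: "\<psi> y \<in> Sn" if "y \<in> sphI I" for y
  proof -
    have "(\<Sum>i\<le>n. (\<psi> y i)^2) = (\<Sum>a\<in>I. (y a)^2)"
      unfolding sumeq atm by (rule sum.cong) (auto simp: \<psi>_def)
    then show ?thesis using that N by (auto simp: sphI_def Sn_def \<psi>_def)
  qed
  have i1: "\<psi> (\<phi> x) = x" if "x \<in> Sn" for x
  proof
    fix i show "\<psi> (\<phi> x) i = x i"
      using that N by (auto simp: \<psi>_def \<phi>_def idxI iv2 Sn_def)
  qed
  have i2: "\<phi> (\<psi> y) = y" if "y \<in> sphI I" for y
  proof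
    fix a show "\<phi> (\<psi> y) a = y a"
      using that by (auto simp: \<psi>_def \<phi>_def iv1 sphI_def)
  qed
  have "homeomorphic_maps (top_of_set Sn) (top_of_set (sphI I)) \<phi> \<psi>"
    unfolding homeomorphic_maps_def using c1 c2 m1 m2 i1 i2
    by (auto simp: continuous_map_subtopology_eu)
  then have "nsphere n homeomorphic_space top_of_set (sphI I)"
    unfolding nsph homeomorphic_space_def by blast
  then show ?thesis
    using homeomorphic_space_contractibility non_contractible_space_nsphere by blast
qed

theorem brouwer_ballI:
  fixes f :: "('a \<Rightarrow> real) \<Rightarrow> ('a \<Rightarrow> real)"
  assumes fin: "finite I"
    and cf: "continuous_on (ballI I) f" and fB: "f ` ballI I \<subseteq> ballI I"
  shows "\<exists>x\<in>ballI I. f x = x"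
proof (cases "I = {}")
  case True
  then have "ballI I = {\<lambda>i. 0}" by (auto simp: ballI_def)
  then show ?thesis using fB by auto
next
  case False
  show ?thesis using brouwer_from_sph[OF fin sph_not_contractible[OF fin False] cf fB] .
qed




lemma cproj_fst [continuous_intros]: "continuous_on S (\<lambda>z::('a\<Rightarrow>'b::topological_space) \<times> 'c::topological_space. fst z i)"
  by (rule continuous_on_compose2[OF continuous_on_product_coordinates, of S fst]) (auto intro: continuous_intros)

lemma argmin_continuous:
  fixes F :: "'a::topological_space \<Rightarrow> 'b::topological_space \<Rightarrow> real" and g :: "'a \<Rightarrow> 'b"
  assumes T: "compact T"
    and cF: "continuous_on (S \<times> T) (\<lambda>z. F (fst z) (snd z))"
    and gT: "\<And>x. x \<in> S \<Longrightarrow> g x \<in> T"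
    and gmin: "\<And>x z. x \<in> S \<Longrightarrow> z \<in> T \<Longrightarrow> F x (g x) \<le> F x z"
    and uniq: "\<And>x y. x \<in> S \<Longrightarrow> y \<in> T \<Longrightarrow> (\<forall>z\<in>T. F x y \<le> F x z) \<Longrightarrow> y = g x"
  shows "continuous_on S g"
proof (cases "T = {}")
  case True
  then have "S = {}" using gT by auto
  then show ?thesis by simp
next
  case Tne: False
  have fim: "g \<in> S \<rightarrow> T" using gT by auto
  define Gr where "Gr = (\<Inter>w\<in>T. (S \<times> T) \<inter> (\<lambda>z. F (fst z) (snd z) - F (fst z) w) -` {..0})"
  have clo: "closedin (top_of_set (S \<times> T)) Gr"
    unfolding Gr_def
  proof (rule closedin_INT[OF Tne])
    fix w assume w: "w \<in> T"
    have c2: "continuous_on (S \<times> T) (\<lambda>z. F (fst z) w)"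
      by (rule continuous_on_compose2[OF cF, of _ "\<lambda>z. (fst z, w)", simplified])
         (use w in \<open>auto intro!: continuous_intros\<close>)
    show "closedin (top_of_set (S \<times> T)) ((S \<times> T) \<inter> (\<lambda>z. F (fst z) (snd z) - F (fst z) w) -` {..0})"
      by (rule continuous_closedin_preimage) (auto intro!: continuous_intros cF c2)
  qed
  have GrE: "(x, y) \<in> Gr \<longleftrightarrow> x \<in> S \<and> y \<in> T \<and> (\<forall>z\<in>T. F x y \<le> F x z)" for x y
    using Tne by (auto simp: Gr_def)
  have cs: "compact_space (top_of_set T)"
    using T by (simp add: compact_space_subtopology compactin_euclidean_iff)
  have cm: "closed_map (top_of_set (S \<times> T)) (top_of_set S) fst"
    using closed_map_fst[OF cs, of "top_of_set S"] by simp
  show ?thesis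
    unfolding continuous_on_closed_gen[OF fim]
  proof (intro allI impI)
    fix U assume U: "closedin (top_of_set T) U"
    have UT: "U \<subseteq> T" using closedin_subset[OF U] by simp
    have eq: "S \<inter> g -` U = fst ` (Gr \<inter> (S \<times> U))"
    proof
      show "S \<inter> g -` U \<subseteq> fst ` (Gr \<inter> (S \<times> U))"
      proof
        fix x assume x: "x \<in> S \<inter> g -` U"
        then have "(x, g x) \<in> Gr \<inter> (S \<times> U)" using GrE gT gmin by auto
        then show "x \<in> fst ` (Gr \<inter> (S \<times> U))" by force
      qed
      show "fst ` (Gr \<inter> (S \<times> U)) \<subseteq> S \<inter> g -` U"
      proof
        fix x assume "x \<in> fst ` (Gr \<inter> (S \<times> U))"
        then obtain y where xy: "(x, y) \<in> Gr" "x \<in> S" "y \<in> U" by auto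
        then have "y = g x" using GrE uniq by blast
        then show "x \<in> S \<inter> g -` U" using xy by auto
      qed
    qed
    have cSU: "closedin (top_of_set (S \<times> T)) (S \<times> U)"
      by (rule closedin_Times) (simp_all add: U)
    have "closedin (top_of_set (S \<times> T)) (Gr \<inter> (S \<times> U))"
      by (rule closedin_Int[OF clo cSU])
    then show "closedin (top_of_set S) (S \<inter> g -` U)"
      using cm unfolding eq closed_map_def by blast
  qed
qed

lemma continuous_on_Max_fam:
  fixes f :: "'i \<Rightarrow> 'a::topological_space \<Rightarrow> real"
  assumes "finite A" "A \<noteq> {}" "\<And>a. a \<in> A \<Longrightarrow> continuous_on S (f a)"
  shows "continuous_on S (\<lambda>x. Max ((\<lambda>a. f a x) ` A))"
  using assms
proof (induction A rule: finite_ne_induct)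
  case (singleton a)
  then show ?case by simp
next
  case (insert a A)
  have "continuous_on S (\<lambda>x. max (f a x) (Max ((\<lambda>a. f a x) ` A)))"
    using insert by (intro continuous_on_max) auto
  moreover have "Max ((\<lambda>a. f a x) ` insert a A) = max (f a x) (Max ((\<lambda>a. f a x) ` A))" for x
    using insert by (simp add: Max_insert)
  ultimately show ?case by simp
qed

lemma powr_concave:
  fixes a u v l :: real
  assumes a: "0 < a" "a \<le> 1" and uv: "0 \<le> u" "0 \<le> v" and l: "0 \<le> l" "l \<le> 1"
  shows "l * u powr a + (1 - l) * v powr a \<le> (l * u + (1 - l) * v) powr a"
proof -
  define w where "w = l * u + (1 - l) * v"
  have w0: "w \<ge> 0" using uv l by (simp add: w_def)
  show ?thesis
  proof (cases "w = 0")
    case True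
    have "l * u = 0" "(1 - l) * v = 0" using True uv l unfolding w_def
      by (smt (verit) mult_nonneg_nonneg)+
    then have h1: "l * u powr a = 0" and h2: "(1 - l) * v powr a = 0"
      using a by auto
    show ?thesis by (metis h1 h2 add.right_neutral powr_ge_zero)
  next
    case False
    then have wp: "w > 0" using w0 by simp
    have key: "z powr a \<le> w powr a * (a * (z / w) + (1 - a))" if z: "z \<ge> 0" for z
    proof (cases "z = 0")
      case True then show ?thesis using a wp by simp
    next
      case False
      then have zp: "z > 0" using z by simp
      have "(z / w) powr a * 1 powr (1 - a) \<le> a * (z / w) + (1 - a) * 1"
        by (rule Youngs_inequality_0) (use a zp wp in auto)
      then have "z powr a / w powr a \<le> a * (z / w) + (1 - a)"
        using zp wp by (simp add: powr_divide)
      then show ?thesis using wp by (simp add: divide_le_eq mult.commute)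
    qed
    have "l * u powr a + (1 - l) * v powr a \<le>
          l * (w powr a * (a * (u / w) + (1 - a))) + (1 - l) * (w powr a * (a * (v / w) + (1 - a)))"
      using key[OF uv(1)] key[OF uv(2)] l by (intro add_mono mult_left_mono) auto
    also have "\<dots> = w powr a * (a * ((l * u + (1 - l) * v) / w) + (1 - a))"
      using wp by (simp add: field_simps)
    also have "\<dots> = w powr a" using wp by (simp add: w_def[symmetric])
    finally show ?thesis by (simp add: w_def)
  qed
qed

lemma is_path_set:
  assumes "is_path E s t vs" "E \<subseteq> V \<times> V" "s \<in> V"
  shows "set vs \<subseteq> V"
proof
  fix v assume "v \<in> set vs"
  then obtain i where i: "i < length vs" "vs ! i = v" by (auto simp: in_set_conv_nth)
  show "v \<in> V"
  proof (cases i)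
    case 0
    then show ?thesis using assms i by (auto simp: is_path_def hd_conv_nth)
  next
    case (Suc j)
    then have "(vs ! j, vs ! Suc j) \<in> E" using assms i by (auto simp: is_path_def)
    then show ?thesis using assms i Suc by auto
  qed
qed

lemma finite_paths:
  assumes "finite V" "E \<subseteq> V \<times> V" "s \<in> V"
  shows "finite (paths E s t)"
proof -
  have "{vs. is_path E s t vs} \<subseteq> {xs. set xs \<subseteq> V \<and> length xs \<le> card V}"
  proof clarify
    fix vs assume p: "is_path E s t vs"
    have sv: "set vs \<subseteq> V" using is_path_set[OF p assms(2,3)] .
    have "length vs = card (set vs)" using p by (simp add: is_path_def distinct_card)
    also have "\<dots> \<le> card V" using sv assms(1) by (rule card_mono[rotated])
    finally show "set vs \<subseteq> V \<and> length vs \<le> card V" using sv by simp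
  qed
  then have "finite {vs. is_path E s t vs}"
    using finite_lists_length_le[OF assms(1)] by (rule finite_subset)
  then show ?thesis unfolding paths_def by simp
qed

lemma path_edges_sub:
  assumes "P \<in> paths E s t"
  shows "P \<subseteq> E" "finite P"
proof -
  obtain vs where vs: "is_path E s t vs" "P = path_edges vs" using assms by (auto simp: paths_def)
  show "finite P" using vs by (simp add: path_edges_def)
  show "P \<subseteq> E"
  proof
    fix z assume "z \<in> P"
    then obtain i where i: "i < min (length vs) (length (tl vs))" "z = (vs ! i, tl vs ! i)"
      using vs by (auto simp: path_edges_def set_zip)
    then have "Suc i < length vs" by auto
    then show "z \<in> E" using vs i by (auto simp: is_path_def nth_tl)
  qed
qed




definition sqd :: "'e set \<Rightarrow> ('e \<Rightarrow> real) \<Rightarrow> ('e \<Rightarrow> real) \<Rightarrow> real" where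
  "sqd E y a = (\<Sum>e\<in>E. (y e - a e)^2)"

definition comb :: "real \<Rightarrow> ('e \<Rightarrow> real) \<Rightarrow> ('e \<Rightarrow> real) \<Rightarrow> ('e \<Rightarrow> real)" where
  "comb l y1 y2 = (\<lambda>e. l * y1 e + (1 - l) * y2 e)"

lemma comb_strat:
  assumes "y1 \<in> strategies E b" "y2 \<in> strategies E b" "0 \<le> l" "l \<le> 1"
  shows "comb l y1 y2 \<in> strategies E b"
proof -
  have "sum (comb l y1 y2) E = l * sum y1 E + (1 - l) * sum y2 E"
    by (simp add: comb_def sum.distrib sum_distrib_left)
  also have "\<dots> \<le> l * b + (1 - l) * b"
    using assms by (intro add_mono mult_left_mono) (auto simp: strategies_def)
  also have "\<dots> = b" by (simp add: algebra_simps)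
  finally have "sum (comb l y1 y2) E \<le> b" .
  moreover have "\<forall>e. 0 \<le> comb l y1 y2 e"
    using assms unfolding strategies_def comb_def by (auto intro!: add_nonneg_nonneg mult_nonneg_nonneg)
  moreover have "\<forall>e. e \<notin> E \<longrightarrow> comb l y1 y2 e = 0"
    using assms unfolding strategies_def comb_def by auto
  ultimately show ?thesis unfolding strategies_def by blast
qed

lemma strategies_compact:
  fixes E :: "('a \<times> 'a) set"
  assumes "finite E" "0 \<le> b"
  shows "compact (strategies E b)"
proof -
  define S where "S e = (if e \<in> E then {0..b} else {0::real})" for e :: "'a \<times> 'a"
  have box: "compact (PiE UNIV S)"
  proof -
    have "compactin (product_topology (\<lambda>_. euclidean) UNIV) (PiE UNIV S)"
      unfolding compactin_PiE by (auto simp: S_def compactin_euclidean_iff)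
    then show ?thesis by (simp add: euclidean_product_topology compactin_euclidean_iff)
  qed
  have cl: "closed {x. sum x E \<le> b}"
    by (rule closed_Collect_le) (auto intro!: continuous_intros)
  have eq: "strategies E b = PiE UNIV S \<inter> {x. sum x E \<le> b}"
  proof (intro equalityI subsetI)
    fix x assume x: "x \<in> strategies E b"
    have "x e \<le> b" if "e \<in> E" for e
    proof -
      have "x e \<le> sum x E" using x that assms(1)
        by (intro member_le_sum) (auto simp: strategies_def)
      then show ?thesis using x by (auto simp: strategies_def)
    qed
    then show "x \<in> PiE UNIV S \<inter> {x. sum x E \<le> b}"
      using x by (auto simp: strategies_def S_def PiE_iff)
  next
    fix x assume x: "x \<in> PiE UNIV S \<inter> {x. sum x E \<le> b}"
    have xs: "x e \<in> S e" for e using x PiE_mem[of x UNIV S e] by blast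
    have sb: "sum x E \<le> b" using x by auto
    show "x \<in> strategies E b"
      unfolding strategies_def
    proof (intro CollectI conjI allI impI sb)
      fix e show "0 \<le> x e" using xs[of e] by (cases "e \<in> E") (auto simp: S_def)
    next
      fix e assume "e \<notin> E" then show "x e = 0" using xs[of e] by (auto simp: S_def)
    qed
  qed
  show ?thesis unfolding eq using box cl by (rule compact_Int_closed)
qed

lemma zero_strat: "0 \<le> b \<Longrightarrow> (\<lambda>e. 0) \<in> strategies E b"
  by (simp add: strategies_def)

locale game =
  fixes V :: "'v set" and E :: "('v \<times> 'v) set" and s :: 'v
    and D :: "'d set" and assets :: "'d \<Rightarrow> 'v set" and L :: "'v \<Rightarrow> real"
    and B :: "'d \<Rightarrow> real" and \<alpha> :: "'d \<Rightarrow> real"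
    and p :: "('v \<times> 'v) \<Rightarrow> real \<Rightarrow> real"
  assumes finV: "finite V" and EV: "E \<subseteq> V \<times> V" and sV: "s \<in> V"
    and finD: "finite D"
    and assetsV: "\<forall>k\<in>D. assets k \<subseteq> V - {s}"
    and Lnn: "\<forall>m. 0 \<le> L m"
    and Bnn: "\<forall>k\<in>D. 0 \<le> B k"
    and pathsne: "\<forall>k\<in>D. \<forall>m\<in>assets k. paths E s m \<noteq> {}"
    and p01: "\<forall>e\<in>E. \<forall>x\<ge>0. 0 \<le> p e x \<and> p e x \<le> 1"
    and logc: "\<forall>e\<in>E. log_convex_nonneg (p e)"
    and C2: "\<forall>e\<in>E. C2_nonneg (p e)"
    and alph: "\<forall>k\<in>D. 0 < \<alpha> k \<and> \<alpha> k \<le> 1"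

context game
begin

lemma finE: "finite E"
  using finV EV by (meson finite_SigmaI finite_subset)

lemma finAssets: "k \<in> D \<Longrightarrow> finite (assets k)"
  using assetsV finV by (meson Diff_subset finite_subset subset_trans)

lemma ppos: "e \<in> E \<Longrightarrow> 0 \<le> t \<Longrightarrow> 0 < p e t \<and> p e t \<le> 1"
  using p01 logc by (auto simp: log_convex_nonneg_def)

lemma pcont: "e \<in> E \<Longrightarrow> continuous_on {0..} (p e)"
proof -
  assume e: "e \<in> E"
  have "C2_nonneg (p e)" using C2 e by auto
  then obtain f' f'' where d: "\<forall>x\<ge>0. (p e has_real_derivative f' x) (at x within {0..}) \<and> (f' has_real_derivative f'' x) (at x within {0..})"
    unfolding C2_nonneg_def by blast
  show ?thesis
    unfolding continuous_on_eq_continuous_within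
    using d DERIV_continuous by fastforce
qed

definition hh :: "'d \<Rightarrow> ('v \<times> 'v) \<Rightarrow> real \<Rightarrow> real" where
  "hh k e t = (- ln (p e t)) powr (\<alpha> k)"

lemma prelec_hh: "e \<in> E \<Longrightarrow> 0 \<le> t \<Longrightarrow> prelec (\<alpha> k) (p e t) = exp (- hh k e t)"
  by (simp add: prelec_def hh_def)

lemma hh_concave:
  assumes k: "k \<in> D" and e: "e \<in> E" and t: "0 \<le> t1" "0 \<le> t2" and l: "0 \<le> l" "l \<le> 1"
  shows "l * hh k e t1 + (1 - l) * hh k e t2 \<le> hh k e (l * t1 + (1 - l) * t2)"
proof -
  define g where "g t = - ln (p e t)" for t
  have g0: "0 \<le> g t" if "0 \<le> t" for t
    using ppos[OF e that] by (simp add: g_def)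
  have cvx: "convex_on {0..} (\<lambda>x. ln (p e x))" using logc e by (simp add: log_convex_nonneg_def)
  have "ln (p e ((1 - l) * t2 + l * t1)) \<le> (1 - l) * ln (p e t2) + l * ln (p e t1)"
    using convex_onD[OF cvx, of l t2 t1] l t by simp
  then have gc: "l * g t1 + (1 - l) * g t2 \<le> g (l * t1 + (1 - l) * t2)"
    by (simp add: g_def algebra_simps)
  have a: "0 < \<alpha> k" "\<alpha> k \<le> 1" using alph k by auto
  have "l * hh k e t1 + (1 - l) * hh k e t2 = l * g t1 powr \<alpha> k + (1 - l) * g t2 powr \<alpha> k"
    by (simp add: hh_def g_def)
  also have "\<dots> \<le> (l * g t1 + (1 - l) * g t2) powr \<alpha> k"
    by (rule powr_concave) (use a g0 t l in auto)
  also have "\<dots> \<le> g (l * t1 + (1 - l) * t2) powr \<alpha> k"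
    by (rule powr_mono2) (use a gc g0 t l in auto)
  finally show ?thesis by (simp add: hh_def g_def)
qed

lemma total_upd:
  assumes "k \<in> D"
  shows "total_inv D (x(k := y)) e = y e + (\<Sum>j\<in>D-{k}. x j e)"
proof -
  have "total_inv D (x(k := y)) e = (x(k := y)) k e + (\<Sum>j\<in>D-{k}. (x(k := y)) j e)"
    unfolding total_inv_def using assms finD by (simp add: sum.remove)
  also have "(\<Sum>j\<in>D-{k}. (x(k := y)) j e) = (\<Sum>j\<in>D-{k}. x j e)"
    by (rule sum.cong) auto
  also have "(x(k := y)) k e = y e" by simp
  finally show ?thesis .
qed

definition cc :: "('d \<Rightarrow> ('v \<times> 'v) \<Rightarrow> real) \<Rightarrow> 'd \<Rightarrow> ('v \<times> 'v) \<Rightarrow> real" where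
  "cc x k e = (\<Sum>j\<in>D-{k}. x j e)"

definition pv :: "'d \<Rightarrow> (('v \<times> 'v) \<Rightarrow> real) \<Rightarrow> (('v \<times> 'v) \<Rightarrow> real) \<Rightarrow> ('v \<times> 'v) set \<Rightarrow> real" where
  "pv k c y P = (\<Prod>e\<in>P. prelec (\<alpha> k) (p e (y e + c e)))"

lemma cost_upd:
  assumes "k \<in> D"
  shows "cost E s D assets L \<alpha> p k (x(k := y)) =
         (\<Sum>m\<in>assets k. L m * Max ((\<lambda>P. pv k (cc x k) y P) ` paths E s m))"
  unfolding cost_def pv_def cc_def by (simp only: total_upd[OF assms])

lemma pv_convex:
  assumes k: "k \<in> D" and P: "P \<in> paths E s m" and c: "\<forall>e. 0 \<le> c e"
    and y: "y1 \<in> strategies E (B k)" "y2 \<in> strategies E (B k)" and l: "0 \<le> l" "l \<le> 1"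
  shows "pv k c (comb l y1 y2) P \<le> l * pv k c y1 P + (1 - l) * pv k c y2 P"
proof -
  have PE: "P \<subseteq> E" and finP: "finite P" using path_edges_sub[OF P] by auto
  have nn: "0 \<le> y e + c e" if "y \<in> strategies E (B k)" for y e
  proof -
    have "0 \<le> y e" using that unfolding strategies_def by blast
    moreover have "0 \<le> c e" using c by blast
    ultimately show ?thesis by simp
  qed
  have pvexp: "pv k c y P = exp (- (\<Sum>e\<in>P. hh k e (y e + c e)))" if "y \<in> strategies E (B k)" for y
  proof -
    have "pv k c y P = (\<Prod>e\<in>P. exp (- hh k e (y e + c e)))"
      unfolding pv_def using PE nn[OF that] by (intro prod.cong) (auto simp: prelec_hh)
    also have "\<dots> = exp (\<Sum>e\<in>P. - hh k e (y e + c e))" using finP by (simp add: exp_sum)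
    finally show ?thesis by (simp add: sum_negf)
  qed
  define A1 where "A1 = (\<Sum>e\<in>P. hh k e (y1 e + c e))"
  define A2 where "A2 = (\<Sum>e\<in>P. hh k e (y2 e + c e))"
  have "l * A1 + (1 - l) * A2 = (\<Sum>e\<in>P. l * hh k e (y1 e + c e) + (1 - l) * hh k e (y2 e + c e))"
    by (simp add: A1_def A2_def sum.distrib sum_distrib_left)
  also have "\<dots> \<le> (\<Sum>e\<in>P. hh k e (comb l y1 y2 e + c e))"
  proof (rule sum_mono)
    fix e assume e: "e \<in> P"
    have "comb l y1 y2 e + c e = l * (y1 e + c e) + (1 - l) * (y2 e + c e)"
      by (simp add: comb_def algebra_simps)
    moreover have eE: "e \<in> E" using e PE by auto
    ultimately show "l * hh k e (y1 e + c e) + (1 - l) * hh k e (y2 e + c e) \<le> hh k e (comb l y1 y2 e + c e)"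
      using hh_concave[OF k eE nn[OF y(1), of e] nn[OF y(2), of e] l] by simp
  qed
  finally have S: "l * A1 + (1 - l) * A2 \<le> (\<Sum>e\<in>P. hh k e (comb l y1 y2 e + c e))" .
  have "pv k c (comb l y1 y2) P = exp (- (\<Sum>e\<in>P. hh k e (comb l y1 y2 e + c e)))"
    by (rule pvexp[OF comb_strat[OF y l]])
  also have "\<dots> \<le> exp (- (l * A1 + (1 - l) * A2))" using S by simp
  also have "\<dots> = exp ((1 - (1 - l)) * (- A1) + (1 - l) * (- A2))" by (simp add: algebra_simps)
  also have "\<dots> \<le> (1 - (1 - l)) * exp (- A1) + (1 - l) * exp (- A2)"
    using convex_onD[OF exp_convex, of "1 - l" "- A1" "- A2"] l by simp
  also have "\<dots> = l * pv k c y1 P + (1 - l) * pv k c y2 P"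
    using pvexp[OF y(1)] pvexp[OF y(2)] by (simp add: A1_def A2_def)
  finally show ?thesis .
qed

lemma cost_convex:
  assumes k: "k \<in> D" and c: "\<forall>e. 0 \<le> cc x k e"
    and y: "y1 \<in> strategies E (B k)" "y2 \<in> strategies E (B k)" and l: "0 \<le> l" "l \<le> 1"
  shows "cost E s D assets L \<alpha> p k (x(k := comb l y1 y2)) \<le>
         l * cost E s D assets L \<alpha> p k (x(k := y1)) + (1 - l) * cost E s D assets L \<alpha> p k (x(k := y2))"
proof -
  let ?M = "\<lambda>y m. Max ((\<lambda>P. pv k (cc x k) y P) ` paths E s m)"
  have Mle: "?M (comb l y1 y2) m \<le> l * ?M y1 m + (1 - l) * ?M y2 m" if m: "m \<in> assets k" for m
  proof -
    have fin: "finite (paths E s m)" by (rule finite_paths[OF finV EV sV])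
    have ne: "paths E s m \<noteq> {}" using pathsne k m by auto
    show ?thesis
    proof (rule Max.boundedI)
      show "finite ((\<lambda>P. pv k (cc x k) (comb l y1 y2) P) ` paths E s m)" using fin by simp
      show "(\<lambda>P. pv k (cc x k) (comb l y1 y2) P) ` paths E s m \<noteq> {}" using ne by simp
      fix r assume "r \<in> (\<lambda>P. pv k (cc x k) (comb l y1 y2) P) ` paths E s m"
      then obtain P where P: "P \<in> paths E s m" and r: "r = pv k (cc x k) (comb l y1 y2) P" by auto
      have "r \<le> l * pv k (cc x k) y1 P + (1 - l) * pv k (cc x k) y2 P"
        unfolding r by (rule pv_convex[OF k P c y l])
      also have "\<dots> \<le> l * ?M y1 m + (1 - l) * ?M y2 m"
        using fin P l by (intro add_mono mult_left_mono Max_ge) auto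
      finally show "r \<le> l * ?M y1 m + (1 - l) * ?M y2 m" .
    qed
  qed
  have "cost E s D assets L \<alpha> p k (x(k := comb l y1 y2)) = (\<Sum>m\<in>assets k. L m * ?M (comb l y1 y2) m)"
    by (rule cost_upd[OF k])
  also have "\<dots> \<le> (\<Sum>m\<in>assets k. L m * (l * ?M y1 m + (1 - l) * ?M y2 m))"
    using Mle Lnn by (intro sum_mono mult_left_mono) auto
  also have "\<dots> = (\<Sum>m\<in>assets k. l * (L m * ?M y1 m) + (1 - l) * (L m * ?M y2 m))"
    by (rule sum.cong) (simp_all add: algebra_simps)
  also have "\<dots> = l * (\<Sum>m\<in>assets k. L m * ?M y1 m) + (1 - l) * (\<Sum>m\<in>assets k. L m * ?M y2 m)"
    by (simp add: sum.distrib sum_distrib_left)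
  also have "\<dots> = l * cost E s D assets L \<alpha> p k (x(k := y1)) + (1 - l) * cost E s D assets L \<alpha> p k (x(k := y2))"
    using cost_upd[OF k, of x y1] cost_upd[OF k, of x y2] by simp
  finally show ?thesis .
qed

end




declare split_paired_All [simp del] split_paired_Ex [simp del]

context game
begin

definition Kset :: "('d \<times> ('v \<times> 'v) \<Rightarrow> real) set" where
  "Kset = {u. (\<forall>k\<in>D. curry u k \<in> strategies E (B k)) \<and> (\<forall>k e. k \<notin> D \<longrightarrow> u (k, e) = 0)}"

definition GG :: "'d \<Rightarrow> ('d \<times> ('v \<times> 'v) \<Rightarrow> real) \<Rightarrow> (('v \<times> 'v) \<Rightarrow> real) \<Rightarrow> real" where
  "GG k u y = cost E s D assets L \<alpha> p k ((curry u)(k := y)) + sqd E y (curry u k)"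

lemma KsetD:
  assumes "u \<in> Kset"
  shows "k \<in> D \<Longrightarrow> 0 \<le> u (k, e)" "k \<in> D \<Longrightarrow> e \<notin> E \<Longrightarrow> u (k, e) = 0"
    "k \<in> D \<Longrightarrow> (\<Sum>e\<in>E. u (k, e)) \<le> B k" "k \<notin> D \<Longrightarrow> u (k, e) = 0"
proof -
  assume k: "k \<in> D"
  then have st: "curry u k \<in> strategies E (B k)" using assms by (simp add: Kset_def)
  have "\<forall>e. 0 \<le> curry u k e" "\<forall>e. e \<notin> E \<longrightarrow> curry u k e = 0" "sum (curry u k) E \<le> B k"
    using st unfolding strategies_def by blast+
  then show "0 \<le> u (k, e)" "e \<notin> E \<Longrightarrow> u (k, e) = 0" "(\<Sum>e\<in>E. u (k, e)) \<le> B k"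
    by (simp_all add: curry_def)
next
  assume "k \<notin> D" then show "u (k, e) = 0" using assms by (simp add: Kset_def)
qed

lemma cc_nonneg: "u \<in> Kset \<Longrightarrow> 0 \<le> cc (curry u) k e"
  unfolding cc_def by (intro sum_nonneg) (auto simp: KsetD(1))

lemma omega_cont:
  assumes k: "k \<in> D" and e: "e \<in> E"
  shows "continuous_on {0..} (\<lambda>t. prelec (\<alpha> k) (p e t))"
proof -
  have cp: "continuous_on {0..} (p e)" by (rule pcont[OF e])
  have cl: "continuous_on {0..} (\<lambda>t. - ln (p e t))"
    by (intro continuous_intros cp) (use ppos[OF e] in force)
  have cpw: "continuous_on {0..} (\<lambda>t. (- ln (p e t)) powr \<alpha> k)"
  proof (rule continuous_on_powr'[OF cl continuous_on_const])
    show "\<forall>x\<in>{0..}. 0 \<le> - ln (p e x) \<and> (- ln (p e x) = 0 \<longrightarrow> 0 < \<alpha> k)"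
      using ppos[OF e] alph k by auto
  qed
  show ?thesis unfolding prelec_def by (intro continuous_intros cpw)
qed

lemma cost_cont:
  assumes k: "k \<in> D"
  shows "continuous_on (Kset \<times> strategies E (B k))
           (\<lambda>z. cost E s D assets L \<alpha> p k ((curry (fst z))(k := snd z)))"
proof -
  let ?S = "Kset \<times> strategies E (B k)"
  let ?T = "\<lambda>e z. snd z e + (\<Sum>j\<in>D-{k}. fst z (j, e))"
  have ce: "continuous_on ?S (\<lambda>z. prelec (\<alpha> k) (p e (?T e z)))" if e: "e \<in> E" for e
  proof (rule continuous_on_compose2[OF omega_cont[OF k e]])
    show "continuous_on ?S (?T e)" by (intro continuous_intros)
    show "?T e ` ?S \<subseteq> {0..}"
    proof clarsimp
      fix u y assume u: "u \<in> Kset" and y: "y \<in> strategies E (B k)"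
      have "0 \<le> y e" using y unfolding strategies_def by blast
      moreover have "0 \<le> (\<Sum>j\<in>D-{k}. u (j, e))" by (intro sum_nonneg) (auto simp: KsetD(1)[OF u])
      ultimately show "0 \<le> y e + (\<Sum>j\<in>D-{k}. u (j, e))" by simp
    qed
  qed
  have eq: "cost E s D assets L \<alpha> p k ((curry (fst z))(k := snd z)) =
     (\<Sum>m\<in>assets k. L m * Max ((\<lambda>P. \<Prod>e\<in>P. prelec (\<alpha> k) (p e (?T e z))) ` paths E s m))" for z
    using cost_upd[OF k, of "curry (fst z)" "snd z"] by (simp add: pv_def cc_def)
  show ?thesis
    unfolding eq
  proof (intro continuous_on_sum continuous_on_mult continuous_on_const)
    fix m assume m: "m \<in> assets k"
    show "continuous_on ?S (\<lambda>z. Max ((\<lambda>P. \<Prod>e\<in>P. prelec (\<alpha> k) (p e (?T e z))) ` paths E s m))"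
    proof (rule continuous_on_Max_fam)
      show "finite (paths E s m)" by (rule finite_paths[OF finV EV sV])
      show "paths E s m \<noteq> {}" using pathsne k m by auto
      fix P assume P: "P \<in> paths E s m"
      show "continuous_on ?S (\<lambda>z. \<Prod>e\<in>P. prelec (\<alpha> k) (p e (?T e z)))"
        using path_edges_sub(1)[OF P] by (intro continuous_on_prod ce) auto
    qed
  qed
qed

lemma GG_cont:
  assumes k: "k \<in> D"
  shows "continuous_on (Kset \<times> strategies E (B k)) (\<lambda>z. GG k (fst z) (snd z))"
proof -
  have "continuous_on (Kset \<times> strategies E (B k)) (\<lambda>z. sqd E (snd z) (curry (fst z) k))"
    unfolding sqd_def curry_def by (intro continuous_intros)
  then show ?thesis unfolding GG_def by (intro continuous_intros cost_cont[OF k])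
qed

lemma GG_cont_y:
  assumes k: "k \<in> D" and u: "u \<in> Kset"
  shows "continuous_on (strategies E (B k)) (GG k u)"
proof -
  let ?X = "strategies E (B k)"
  have c1: "continuous_on ?X (\<lambda>y. (u, y))" by (intro continuous_intros)
  have c2: "continuous_on ((\<lambda>y. (u, y)) ` ?X) (\<lambda>z. GG k (fst z) (snd z))"
    by (rule continuous_on_subset[OF GG_cont[OF k]]) (use u in auto)
  have "continuous_on ?X ((\<lambda>z. GG k (fst z) (snd z)) \<circ> (\<lambda>y. (u, y)))"
    by (rule continuous_on_compose[OF c1 c2])
  then show ?thesis by (simp add: o_def)
qed

lemma sqd_mid:
  "sqd E (comb (1/2) y1 y2) a = (sqd E y1 a + sqd E y2 a) / 2 - (\<Sum>e\<in>E. ((y1 e - y2 e) / 2)^2)"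
proof -
  have "sqd E (comb (1/2) y1 y2) a = (\<Sum>e\<in>E. ((y1 e - a e)^2 + (y2 e - a e)^2) / 2 - ((y1 e - y2 e) / 2)^2)"
    unfolding sqd_def comb_def by (rule sum.cong) (simp_all add: power2_eq_square field_simps)
  also have "\<dots> = (sqd E y1 a + sqd E y2 a) / 2 - (\<Sum>e\<in>E. ((y1 e - y2 e) / 2)^2)"
    by (simp add: sqd_def sum_subtractf sum.distrib flip: sum_divide_distrib)
  finally show ?thesis .
qed

lemma GG_unique:
  assumes k: "k \<in> D" and u: "u \<in> Kset"
    and y1: "y1 \<in> strategies E (B k)" and y2: "y2 \<in> strategies E (B k)"
    and m1: "\<forall>z\<in>strategies E (B k). GG k u y1 \<le> GG k u z"
    and m2: "\<forall>z\<in>strategies E (B k). GG k u y2 \<le> GG k u z"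
  shows "y1 = y2"
proof (rule ccontr)
  assume ne: "y1 \<noteq> y2"
  have "\<exists>e. y1 e \<noteq> y2 e" using ne by (meson ext)
  then obtain e where e: "y1 e \<noteq> y2 e" by blast
  have eE: "e \<in> E"
  proof (rule ccontr)
    assume "e \<notin> E"
    then have "y1 e = 0" "y2 e = 0" using y1 y2 unfolding strategies_def by blast+
    then show False using e by simp
  qed
  define mid where "mid = comb (1/2) y1 y2"
  have midS: "mid \<in> strategies E (B k)" unfolding mid_def by (rule comb_strat[OF y1 y2]) auto
  let ?a = "curry u k"
  let ?f = "\<lambda>y. cost E s D assets L \<alpha> p k ((curry u)(k := y))"
  have fc: "?f mid \<le> 1/2 * ?f y1 + (1 - 1/2) * ?f y2"
    unfolding mid_def by (rule cost_convex[OF k _ y1 y2]) (auto intro: cc_nonneg[OF u])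
  have pos: "0 < (\<Sum>e\<in>E. ((y1 e - y2 e) / 2)^2)"
  proof -
    have "0 < ((y1 e - y2 e) / 2)^2" using e by simp
    also have "\<dots> \<le> (\<Sum>e\<in>E. ((y1 e - y2 e) / 2)^2)"
      by (rule member_le_sum) (use eE finE in auto)
    finally show ?thesis .
  qed
  have "GG k u mid < (GG k u y1 + GG k u y2) / 2"
  proof -
    have fc': "?f mid \<le> ?f y1 / 2 + ?f y2 / 2" using fc by simp
    show ?thesis using fc' pos unfolding GG_def mid_def sqd_mid by (simp add: field_simps)
  qed
  moreover have "GG k u y1 \<le> GG k u mid" using m1 midS by blast
  moreover have "GG k u y1 = GG k u y2" using m1 m2 y1 y2 by (meson order_antisym)
  ultimately show False by simp
qed

definition BR :: "'d \<Rightarrow> ('d \<times> ('v \<times> 'v) \<Rightarrow> real) \<Rightarrow> (('v \<times> 'v) \<Rightarrow> real)" where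
  "BR k u = (THE y. y \<in> strategies E (B k) \<and> (\<forall>z\<in>strategies E (B k). GG k u y \<le> GG k u z))"

lemma BR:
  assumes k: "k \<in> D" and u: "u \<in> Kset"
  shows "BR k u \<in> strategies E (B k) \<and> (\<forall>z\<in>strategies E (B k). GG k u (BR k u) \<le> GG k u z)"
proof -
  have Bk: "0 \<le> B k" using Bnn k by auto
  obtain y where y: "y \<in> strategies E (B k)" "\<forall>z\<in>strategies E (B k). GG k u y \<le> GG k u z"
    using continuous_attains_inf[OF strategies_compact[OF finE Bk] _ GG_cont_y[OF k u]]
      zero_strat[OF Bk] by blast
  show ?thesis unfolding BR_def
    by (rule theI[of _ y]) (use y GG_unique[OF k u] in blast)+
qed

lemma BR_unique:
  assumes k: "k \<in> D" and u: "u \<in> Kset" and y: "y \<in> strategies E (B k)"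
    and m: "\<forall>z\<in>strategies E (B k). GG k u y \<le> GG k u z"
  shows "y = BR k u"
  using GG_unique[OF k u y _ m] BR[OF k u] by blast

lemma BR_cont:
  assumes k: "k \<in> D"
  shows "continuous_on Kset (BR k)"
proof (rule argmin_continuous[where F = "GG k"])
  have Bk: "0 \<le> B k" using Bnn k by auto
  show "compact (strategies E (B k))" by (rule strategies_compact[OF finE Bk])
  show "continuous_on (Kset \<times> strategies E (B k)) (\<lambda>z. GG k (fst z) (snd z))" by (rule GG_cont[OF k])
  show "\<And>x. x \<in> Kset \<Longrightarrow> BR k x \<in> strategies E (B k)" using BR[OF k] by blast
  show "\<And>x z. x \<in> Kset \<Longrightarrow> z \<in> strategies E (B k) \<Longrightarrow> GG k x (BR k x) \<le> GG k x z" using BR[OF k] by blast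
  show "\<And>x y. x \<in> Kset \<Longrightarrow> y \<in> strategies E (B k) \<Longrightarrow> \<forall>z\<in>strategies E (B k). GG k x y \<le> GG k x z \<Longrightarrow> y = BR k x"
    using BR_unique[OF k] by blast
qed

end




declare split_paired_All [simp del] split_paired_Ex [simp del]

context game
begin

definition Phi :: "('d \<times> ('v \<times> 'v) \<Rightarrow> real) \<Rightarrow> ('d \<times> ('v \<times> 'v) \<Rightarrow> real)" where
  "Phi u = (\<lambda>i. if fst i \<in> D then BR (fst i) u (snd i) else 0)"

lemma Phi_K:
  assumes u: "u \<in> Kset" shows "Phi u \<in> Kset"
proof -
  have "curry (Phi u) k = BR k u" if "k \<in> D" for k
    using that by (auto simp: Phi_def curry_def)
  then show ?thesis using BR[OF _ u] unfolding Kset_def by (auto simp: Phi_def)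
qed

lemma Phi_cont: "continuous_on Kset Phi"
proof (rule continuous_on_coordinatewise_then_product)
  fix i :: "'d \<times> ('v \<times> 'v)"
  show "continuous_on Kset (\<lambda>u. Phi u i)"
  proof (cases "fst i \<in> D")
    case True
    then show ?thesis unfolding Phi_def
      using continuous_on_product_then_coordinatewise[OF BR_cont[OF True], of "snd i"] by simp
  next
    case False
    then show ?thesis unfolding Phi_def by simp
  qed
qed

definition Rt :: "('d \<times> ('v \<times> 'v) \<Rightarrow> real) \<Rightarrow> ('d \<times> ('v \<times> 'v) \<Rightarrow> real)" where
  "Rt u = (\<lambda>i. if fst i \<in> D \<and> snd i \<in> E
     then max 0 (u i) * (B (fst i) / max (B (fst i)) (\<Sum>e'\<in>E. max 0 (u (fst i, e')))) else 0)"

lemma Rt_cont: "continuous_on UNIV Rt"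
proof (rule continuous_on_coordinatewise_then_product)
  fix i :: "'d \<times> ('v \<times> 'v)"
  obtain k e where i: "i = (k, e)" by fastforce
  show "continuous_on UNIV (\<lambda>u. Rt u i)"
  proof (cases "k \<in> D \<and> e \<in> E")
    case kE: True
    show ?thesis
    proof (cases "B k = 0")
      case True
      then show ?thesis unfolding Rt_def i using kE by simp
    next
      case False
      then have Bp: "0 < B k" using Bnn kE by force
      show ?thesis unfolding Rt_def i using kE
        by (simp, intro continuous_intros) (use Bp in \<open>auto simp: max_def\<close>)
    qed
  next
    case False
    have h: "Rt u i = 0" for u using False by (auto simp: Rt_def i)
    show ?thesis using continuous_on_const[of UNIV "0::real"] by (rule continuous_on_eq) (simp add: h)
  qed
qed

lemma Rt_K: "Rt u \<in> Kset"
proof -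
  have "curry (Rt u) k \<in> strategies E (B k)" if k: "k \<in> D" for k
  proof -
    define S where "S = (\<Sum>e'\<in>E. max 0 (u (k, e')))"
    define c where "c = B k / max (B k) S"
    have Bk: "0 \<le> B k" using Bnn k by auto
    have S0: "0 \<le> S" unfolding S_def by (intro sum_nonneg) auto
    have c0: "0 \<le> c" using Bk S0 by (simp add: c_def)
    have cur: "curry (Rt u) k e = (if e \<in> E then max 0 (u (k, e)) * c else 0)" for e
      using k by (simp add: Rt_def curry_def c_def S_def)
    have "sum (curry (Rt u) k) E = (\<Sum>e\<in>E. max 0 (u (k, e)) * c)"
    proof (rule sum.cong[OF refl])
      fix e assume "e \<in> E" then show "curry (Rt u) k e = max 0 (u (k, e)) * c" using cur[of e] by simp
    qed
    also have "\<dots> = S * c" by (simp add: S_def sum_distrib_right)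
    also have "\<dots> \<le> B k"
    proof (cases "max (B k) S = 0")
      case True then show ?thesis using Bk by (simp add: c_def)
    next
      case False
      then have mp: "0 < max (B k) S" using Bk S0 by (auto simp: max_def)
      have "S * c = B k * (S / max (B k) S)" by (simp add: c_def)
      also have "\<dots> \<le> B k * 1"
        using mp Bk by (intro mult_left_mono) (auto simp: divide_le_eq)
      finally show ?thesis by simp
    qed
    finally show ?thesis unfolding strategies_def using cur c0 by auto
  qed
  moreover have "\<forall>k e. k \<notin> D \<longrightarrow> Rt u (k, e) = 0" by (simp add: Rt_def)
  ultimately show ?thesis unfolding Kset_def by blast
qed

lemma Rt_id: assumes u: "u \<in> Kset" shows "Rt u = u"
proof
  fix i :: "'d \<times> ('v \<times> 'v)"
  obtain k e where i: "i = (k, e)" by fastforce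
  show "Rt u i = u i"
  proof (cases "k \<in> D \<and> e \<in> E")
    case True
    then have k: "k \<in> D" and e: "e \<in> E" by auto
    have nn: "0 \<le> u (k, e')" for e' using KsetD(1)[OF u k] .
    have S: "(\<Sum>e'\<in>E. max 0 (u (k, e'))) = (\<Sum>e'\<in>E. u (k, e'))"
      using nn by (intro sum.cong) auto
    have SB: "(\<Sum>e'\<in>E. u (k, e')) \<le> B k" using KsetD(3)[OF u k] .
    show ?thesis
    proof (cases "B k = 0")
      case True
      have "u (k, e) \<le> (\<Sum>e'\<in>E. u (k, e'))"
        using e finE nn by (intro member_le_sum) auto
      then have "u (k, e) = 0" using SB True nn[of e] by linarith
      then show ?thesis using True by (simp add: Rt_def i)
    next
      case False
      then have Bp: "0 < B k" using Bnn k by force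
      have "max (B k) (\<Sum>e'\<in>E. max 0 (u (k, e'))) = B k" using S SB by simp
      then show ?thesis using Bp k e nn[of e] by (simp add: Rt_def i)
    qed
  next
    case False
    then have "u (k, e) = 0" using KsetD(2,4)[OF u] by blast
    then show ?thesis using False by (simp add: Rt_def i)
  qed
qed

definition rho :: real where "rho = 1 + (\<Sum>k\<in>D. B k)"

lemma rho_pos: "0 < rho" and Bk_le_rho: "k \<in> D \<Longrightarrow> B k \<le> rho"
proof -
  have "0 \<le> (\<Sum>k\<in>D. B k)" using Bnn by (intro sum_nonneg) auto
  then show "0 < rho" by (simp add: rho_def)
  assume k: "k \<in> D"
  have "B k \<le> (\<Sum>k\<in>D. B k)" using k finD Bnn by (intro member_le_sum) auto
  then show "B k \<le> rho" by (simp add: rho_def)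
qed

lemma K_bound:
  assumes u: "u \<in> Kset"
  shows "(\<Sum>i\<in>D \<times> E. (u i)^2) \<le> rho^2"
proof -
  have le: "u i \<le> rho" "0 \<le> u i" if "i \<in> D \<times> E" for i
  proof -
    obtain k e where i0: "i = (k, e)" by fastforce
    then have i: "i = (k, e)" "k \<in> D" "e \<in> E" using that by auto
    have nn: "0 \<le> u (k, e')" for e' using KsetD(1)[OF u i(2)] .
    have "u (k, e) \<le> (\<Sum>e'\<in>E. u (k, e'))"
      using i finE nn by (intro member_le_sum) auto
    also have "\<dots> \<le> B k" using KsetD(3)[OF u i(2)] .
    also have "\<dots> \<le> rho" using Bk_le_rho[OF i(2)] .
    finally show "u i \<le> rho" using i by simp
    show "0 \<le> u i" using nn i by simp
  qed
  have "(\<Sum>i\<in>D \<times> E. (u i)^2) \<le> (\<Sum>i\<in>D \<times> E. rho * u i)"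
    using le by (intro sum_mono) (simp add: power2_eq_square mult_right_mono)
  also have "\<dots> = rho * (\<Sum>k\<in>D. \<Sum>e\<in>E. u (k, e))"
    by (simp add: sum_distrib_left sum.cartesian_product)
  also have "\<dots> \<le> rho * (\<Sum>k\<in>D. B k)"
    using rho_pos KsetD(3)[OF u] by (intro mult_left_mono sum_mono) auto
  also have "\<dots> \<le> rho * rho"
    using rho_pos by (intro mult_left_mono) (auto simp: rho_def)
  finally show ?thesis by (simp add: power2_eq_square)
qed

lemma fixed_point: "\<exists>u\<in>Kset. Phi u = u"
proof -
  define I where "I = D \<times> E"
  have finI: "finite I" unfolding I_def using finD finE by simp
  define sc where "sc w = (\<lambda>j. rho * w j)" for w :: "'d \<times> ('v \<times> 'v) \<Rightarrow> real"
  define g where "g w = (\<lambda>i. Phi (Rt (sc w)) i / rho)" for w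
  have csc: "continuous_on UNIV sc" unfolding sc_def by (intro continuous_intros)
  have c1: "continuous_on UNIV (\<lambda>w. Rt (sc w))"
    using continuous_on_compose[OF csc continuous_on_subset[OF Rt_cont]] by (simp add: o_def)
  have c2: "continuous_on UNIV (\<lambda>w. Phi (Rt (sc w)))"
    using continuous_on_compose[OF c1 continuous_on_subset[OF Phi_cont]] Rt_K by (auto simp: o_def)
  have cg: "continuous_on (ballI I) g"
    unfolding g_def
  proof (rule continuous_on_coordinatewise_then_product)
    fix i show "continuous_on (ballI I) (\<lambda>w. Phi (Rt (sc w)) i / rho)"
      using continuous_on_product_then_coordinatewise[OF continuous_on_subset[OF c2 subset_UNIV], of "ballI I" i] rho_pos
      by (intro continuous_intros) auto
  qed
  have gB: "g ` ballI I \<subseteq> ballI I"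
  proof clarify
    fix w assume "w \<in> ballI I"
    define v where "v = Phi (Rt (sc w))"
    have vK: "v \<in> Kset" unfolding v_def by (rule Phi_K[OF Rt_K])
    have "(\<Sum>i\<in>I. (g w i)^2) = (\<Sum>i\<in>I. (v i)^2) / rho^2"
      by (simp add: g_def v_def power_divide sum_divide_distrib)
    also have "\<dots> \<le> 1" using K_bound[OF vK] rho_pos by (simp add: I_def)
    finally have "(\<Sum>i\<in>I. (g w i)^2) \<le> 1" .
    moreover have "g w i = 0" if "i \<notin> I" for i
    proof -
      obtain k e where i: "i = (k, e)" by fastforce
      have "v (k, e) = 0"
      proof (cases "k \<in> D")
        case True
        then have "e \<notin> E" using that i by (auto simp: I_def)
        then show ?thesis using KsetD(2)[OF vK True] by blast
      next
        case False
        then show ?thesis using KsetD(4)[OF vK] by blast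
      qed
      then have "v i = 0" by (simp add: i)
      then show ?thesis by (simp add: g_def v_def)
    qed
    ultimately show "g w \<in> ballI I" by (simp add: ballI_def)
  qed
  obtain w where w: "w \<in> ballI I" "g w = w" using brouwer_ballI[OF finI cg gB] by blast
  define u where "u = sc w"
  have "Phi (Rt u) = u"
  proof
    fix i
    have "Phi (Rt u) i / rho = w i" using w(2) unfolding g_def u_def by (metis)
    then show "Phi (Rt u) i = u i" using rho_pos by (simp add: u_def sc_def field_simps)
  qed
  then have uK: "u \<in> Kset" using Phi_K[OF Rt_K] by metis
  then have "Phi u = u" using \<open>Phi (Rt u) = u\<close> Rt_id by simp
  then show ?thesis using uK by blast
qed

lemma nash_from_fixed:
  assumes u: "u \<in> Kset" and fxp: "Phi u = u" and k: "k \<in> D" and y: "y \<in> strategies E (B k)"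
  shows "cost E s D assets L \<alpha> p k (curry u) \<le> cost E s D assets L \<alpha> p k ((curry u)(k := y))"
proof (rule ccontr)
  assume neg: "\<not> ?thesis"
  let ?a = "curry u k"
  let ?f = "\<lambda>z. cost E s D assets L \<alpha> p k ((curry u)(k := z))"
  have fa: "?f ?a = cost E s D assets L \<alpha> p k (curry u)" by simp
  have aS: "?a \<in> strategies E (B k)" using u k by (simp add: Kset_def)
  have BRa: "BR k u = ?a"
  proof
    fix e show "BR k u e = ?a e"
      using fun_cong[OF fxp, of "(k, e)"] k by (simp add: Phi_def curry_def)
  qed
  have mina: "GG k u ?a \<le> GG k u z" if "z \<in> strategies E (B k)" for z
    using BR[OF k u] that BRa by metis
  define Q where "Q = sqd E y ?a"
  have Q0: "0 \<le> Q" unfolding Q_def sqd_def by (intro sum_nonneg) auto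
  define dlt where "dlt = ?f ?a - ?f y"
  have dpos: "0 < dlt" using neg fa unfolding dlt_def by linarith
  define t where "t = min 1 (dlt / (2 * (Q + 1)))"
  have t0: "0 < t" "t \<le> 1" using dpos Q0 by (auto simp: t_def)
  have tQ: "t * Q \<le> dlt / 2"
  proof -
    have "t * Q \<le> dlt / (2 * (Q + 1)) * Q" using Q0 by (intro mult_right_mono) (auto simp: t_def)
    also have "\<dots> = dlt / 2 * (Q / (Q + 1))" using Q0 by (simp add: field_simps)
    also have "\<dots> \<le> dlt / 2 * 1" using Q0 dpos by (intro mult_left_mono) auto
    finally show ?thesis by simp
  qed
  define z where "z = comb t y ?a"
  have zS: "z \<in> strategies E (B k)" unfolding z_def by (rule comb_strat[OF y aS]) (use t0 in auto)
  have fz: "?f z \<le> t * ?f y + (1 - t) * ?f ?a"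
    unfolding z_def by (rule cost_convex[OF k _ y aS]) (use t0 cc_nonneg[OF u] in auto)
  have sz: "sqd E z ?a = t^2 * Q"
    unfolding Q_def sqd_def z_def comb_def
    by (simp add: sum_distrib_left power2_eq_square algebra_simps)
  have "?f ?a = GG k u ?a" by (simp add: GG_def sqd_def)
  also have "\<dots> \<le> GG k u z" using mina[OF zS] by (simp add: GG_def sqd_def)
  also have "\<dots> = ?f z + t^2 * Q" by (simp add: GG_def sz)
  finally have "?f ?a \<le> t * ?f y + (1 - t) * ?f ?a + t^2 * Q" using fz by linarith
  then have "t * dlt \<le> t * (t * Q)" unfolding dlt_def by (simp add: algebra_simps power2_eq_square)
  then have "dlt \<le> t * Q" using t0 by simp
  then show False using tQ dpos by linarith
qed

theorem equilibrium:
  "\<exists>xb. (\<forall>k\<in>D. xb k \<in> strategies E (B k)) \<and>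
     (\<forall>k\<in>D. \<forall>y\<in>strategies E (B k).
        cost E s D assets L \<alpha> p k xb \<le> cost E s D assets L \<alpha> p k (xb(k := y)))"
proof -
  obtain u where u: "u \<in> Kset" "Phi u = u" using fixed_point by blast
  show ?thesis
    by (rule exI[of _ "curry u"]) (use u nash_from_fixed in \<open>auto simp: Kset_def\<close>)
qed

end


theorem proposition4:
  fixes V :: "'v set" and E :: "('v \<times> 'v) set" and s :: 'v
    and D :: "'d set" and assets :: "'d \<Rightarrow> 'v set" and L :: "'v \<Rightarrow> real"
    and B :: "'d \<Rightarrow> real" and \<alpha> :: "'d \<Rightarrow> real"
    and p :: "('v \<times> 'v) \<Rightarrow> real \<Rightarrow> real"
  assumes "finite V" and "E \<subseteq> V \<times> V" and "s \<in> V"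
    and "finite D"
    and "\<forall>k\<in>D. assets k \<subseteq> V - {s}"
    and "\<forall>m. 0 \<le> L m"
    and "\<forall>k\<in>D. 0 \<le> B k"
    and "\<forall>k\<in>D. \<forall>m\<in>assets k. paths E s m \<noteq> {}"
    and "\<forall>e\<in>E. \<forall>x\<ge>0. 0 \<le> p e x \<and> p e x \<le> 1"
    and "\<forall>e\<in>E. 0 < p e 0"
    and "\<forall>e\<in>E. log_convex_nonneg (p e)"
    and "\<forall>e\<in>E. strictly_decreasing_nonneg (p e)"
    and "\<forall>e\<in>E. C2_nonneg (p e)"
    and "\<forall>k\<in>D. 0 < \<alpha> k \<and> \<alpha> k \<le> 1"
  shows "\<exists>xb. (\<forall>k\<in>D. xb k \<in> strategies E (B k)) \<and>
           (\<forall>k\<in>D. \<forall>y\<in>strategies E (B k).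
              cost E s D assets L \<alpha> p k xb \<le> cost E s D assets L \<alpha> p k (xb(k := y)))"
proof -
  have g: "game V E s D assets L B \<alpha> p"
    unfolding game_def using assms by blast
  show ?thesis by (rule game.equilibrium[OF g])
qed

end
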